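(* Let $D$ be a finite digraph and $k$ a positive integer. The cop player has a winning strategy with $k$ cops in the lift-free cops-and-robber game on $D$ if and only if $\mathrm{ddp}(D) \le k$.
   Context: A reachable fragment of a digraph $D$ is a vertex set $R\subseteq V(D)$, maximal by inclusion, that contains a vertex $s$ (a source) from which every vertex of $R$ is reachable by a directed path in $D$; it is regarded as the induced subdigraph $D[R]$. The DAG-depth $\mathrm{ddp}(D)$ is defined recursively: $\mathrm{ddp}(D)=1$ if $|V(D)|=1$; if $D$ has exactly one reachable fragment and $|V(D)|>1$, then $\mathrm{ddp}(D)=1+\min_{v\in V(D)}\mathrm{ddp}(D-v)$; otherwise, if $R_1,\dots,R_p$ ($p\ge 2$) are the reachable fragments of $D$, $\mathrm{ddp}(D)=\max_{1\le i\le p}\mathrm{ddp}(D[R_i])$. Lift-free cops-and-robber game on a digraph $D$ with $k$ cops: the robber occupies a vertex, chosen at the start, and knows the cops' positions; the cop player knows the robber's position. In each turn the cop player announces a vertex on which a new cop will be placed; before the cop lands, the robber may move arbitrarily far along directed paths of $D$ (respecting edge directions) that avoid vertices already occupied by cops. Once placed, a cop never leaves its vertex. The robber is caught when a cop is placed on the robber's current vertex (equivalently, the robber stands on a vertex $v$ such that $v$ and all vertices of $N^+_D(v)$ are occupied by cops). The cop player wins if the robber is caught before the $k$ cops are used up; otherwise the robber wins. *)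

theory Defs
  imports Main
begin

definition reach :: "('a \<times> 'a) set \<Rightarrow> 'a set \<Rightarrow> 'a \<Rightarrow> 'a \<Rightarrow> bool" where
  "reach E S u v \<longleftrightarrow> u \<in> S \<and> (u, v) \<in> (E \<inter> (S \<times> S))\<^sup>*"

definition has_source :: "('a \<times> 'a) set \<Rightarrow> 'a set \<Rightarrow> 'a set \<Rightarrow> bool" where
  "has_source E S R \<longleftrightarrow> R \<subseteq> S \<and> (\<exists>s\<in>R. \<forall>v\<in>R. reach E S s v)"

definition frags :: "('a \<times> 'a) set \<Rightarrow> 'a set \<Rightarrow> 'a set set" where
  "frags E S = {R. has_source E S R \<and> (\<forall>R'. has_source E S R' \<and> R \<subseteq> R' \<longrightarrow> R' = R)}"

lemma frags_subset: "R \<in> frags E S \<Longrightarrow> R \<subseteq> S"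
  by (auto simp: frags_def has_source_def)

lemma frags_psubset:
  assumes "R \<in> frags E S" "card (frags E S) \<noteq> 1" "S \<noteq> {}"
  shows "R \<subset> S"
proof -
  have sub: "R \<subseteq> S" using assms(1) frags_subset by blast
  show ?thesis
  proof (rule ccontr)
    assume "\<not> R \<subset> S"
    hence RS: "R = S" using sub by blast
    have "frags E S = {S}"
    proof
      show "frags E S \<subseteq> {S}"
      proof
        fix R' assume R': "R' \<in> frags E S"
        have "has_source E S S" using assms(1) RS by (simp add: frags_def)
        moreover have "R' \<subseteq> S" using R' frags_subset by blast
        ultimately show "R' \<in> {S}" using R' by (auto simp: frags_def)
      qed
      show "{S} \<subseteq> frags E S" using assms(1) RS by simp
    qed
    thus False using assms(2) by simp
  qed
qed

function ddp :: "('a \<times> 'a) set \<Rightarrow> 'a set \<Rightarrow> nat" where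
  "ddp E S =
    (if infinite S \<or> S = {} then 0
     else if card S = 1 then 1
     else if card (frags E S) = 1 then 1 + Min ((\<lambda>v. ddp E (S - {v})) ` S)
     else Max ((\<lambda>R. ddp E R) ` frags E S))"
  by pat_completeness auto
termination
proof (relation "measure (\<lambda>(E, S). card S)")
  show "wf (measure (\<lambda>(E, S). card S))" by simp
next
  fix E :: "('a \<times> 'a) set" and S v
  assume "\<not> (infinite S \<or> S = {})" "v \<in> S"
  thus "((E, S - {v}), E, S) \<in> measure (\<lambda>(E, S). card S)"
    by (simp add: card_gt_0_iff)
next
  fix E :: "('a \<times> 'a) set" and S R
  assume a: "\<not> (infinite S \<or> S = {})" "card (frags E S) \<noteq> 1" "R \<in> frags E S"
  hence "R \<subset> S" using frags_psubset by blast
  thus "((E, R), E, S) \<in> measure (\<lambda>(E, S). card S)"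
    using a(1) by (simp add: psubset_card_mono)
qed

text \<open>State: set C of vertices occupied by cops,
  robber position r (not in C), n cops still available.
  cop_wins E V C r n: the cop player can force a capture using at most n further cops.
  In each turn the cop player announces v; then the robber moves along a directed
  path in D - C to some r'; then the cop lands on v; the robber is caught iff r' = v.\<close>
fun cop_wins :: "('a \<times> 'a) set \<Rightarrow> 'a set \<Rightarrow> 'a set \<Rightarrow> 'a \<Rightarrow> nat \<Rightarrow> bool" where
  "cop_wins E V C r 0 = False"
| "cop_wins E V C r (Suc n) =
     (\<exists>v\<in>V. \<forall>r'. reach E (V - C) r r' \<longrightarrow> r' = v \<or> cop_wins E V (C \<union> {v}) r' n)"

definition cops_win :: "('a \<times> 'a) set \<Rightarrow> 'a set \<Rightarrow> nat \<Rightarrow> bool" where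
  "cops_win E V k \<longleftrightarrow> (\<forall>r\<in>V. cop_wins E V {} r k)"

end

theory Submission
  imports Defs
begin

declare ddp.simps[simp del]

definition Rch :: "('a \<times> 'a) set \<Rightarrow> 'a set \<Rightarrow> 'a \<Rightarrow> 'a set" where
  "Rch E S x = {y. reach E S x y}"

lemma reach_in: "reach E S u v \<Longrightarrow> u \<in> S \<and> v \<in> S"
  unfolding reach_def by (auto elim: rtranclE)

lemma reach_refl: "u \<in> S \<Longrightarrow> reach E S u u"
  unfolding reach_def by auto

lemma reach_mono: "S \<subseteq> S' \<Longrightarrow> reach E S u v \<Longrightarrow> reach E S' u v"
proof -
  assume a: "S \<subseteq> S'" "reach E S u v"
  have "E \<inter> S \<times> S \<subseteq> E \<inter> S' \<times> S'" using a(1) by auto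
  then show ?thesis using a unfolding reach_def by (meson rtrancl_mono subsetD)
qed

lemma reach_step: "reach E S u v \<Longrightarrow> (v, w) \<in> E \<Longrightarrow> w \<in> S \<Longrightarrow> reach E S u w"
proof -
  assume a: "reach E S u v" "(v, w) \<in> E" "w \<in> S"
  have "v \<in> S" using reach_in[OF a(1)] by auto
  then show ?thesis using a unfolding reach_def
    by (meson IntI SigmaI rtrancl.rtrancl_into_rtrancl)
qed

lemma reach_closed:
  assumes r: "reach E S r x" and p: "reach E (S - A) x y"
  shows "reach E (Rch E S r - A) x y"
proof -
  have x: "x \<in> S - A" using reach_in[OF p] by auto
  have "(x, y) \<in> (E \<inter> (S - A) \<times> (S - A))\<^sup>*" using p unfolding reach_def by auto
  then show ?thesis
  proof (induction rule: rtrancl_induct)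
    case base
    then show ?case using x r by (auto simp: Rch_def intro: reach_refl)
  next
    case (step y z)
    have "y \<in> Rch E S r - A" using reach_in[OF step.IH] by auto
    hence ry: "reach E S r y" by (simp add: Rch_def)
    have "reach E S r z" using reach_step[OF ry] step.hyps(2) by auto
    hence "z \<in> Rch E S r - A" using step.hyps(2) by (auto simp: Rch_def)
    then show ?case using step.IH step.hyps(2) \<open>y \<in> Rch E S r - A\<close>
      unfolding reach_def by (meson IntD1 IntI SigmaI rtrancl.rtrancl_into_rtrancl)
  qed
qed

lemma Rch_sub: "Rch E S x \<subseteq> S"
  by (auto simp: Rch_def dest: reach_in)

lemma Rch_self: "x \<in> S \<Longrightarrow> x \<in> Rch E S x"
  by (simp add: Rch_def reach_refl)

lemma Rch_restrict:
  assumes "x \<in> Rch E S r"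
  shows "Rch E (S - A) x = Rch E (Rch E S r - A) x"
proof
  show "Rch E (S - A) x \<subseteq> Rch E (Rch E S r - A) x"
    using assms reach_closed by (fastforce simp: Rch_def)
  have "Rch E S r - A \<subseteq> S - A" using Rch_sub[of E S r] by blast
  then show "Rch E (Rch E S r - A) x \<subseteq> Rch E (S - A) x"
    using reach_mono by (fastforce simp: Rch_def)
qed

lemma Rch_idem:
  assumes "r \<in> S"
  shows "Rch E (Rch E S r) r = Rch E S r"
  using Rch_restrict[of r E S r "{}"] Rch_self[OF assms] by simp

lemma Rch_mono: "S \<subseteq> S' \<Longrightarrow> Rch E S x \<subseteq> Rch E S' x"
  using reach_mono by (fastforce simp: Rch_def)

lemma has_source_Rch: "x \<in> U \<Longrightarrow> has_source E U (Rch E U x)"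
  unfolding has_source_def using Rch_sub Rch_self by (fastforce simp: Rch_def)

lemma frag_exists:
  assumes "finite U" "x \<in> U"
  shows "\<exists>R\<in>frags E U. Rch E U x \<subseteq> R"
proof -
  let ?F = "{R. has_source E U R \<and> Rch E U x \<subseteq> R}"
  have "?F \<subseteq> Pow U" unfolding has_source_def by blast
  hence fin: "finite ?F" using assms(1) finite_subset by blast
  have ne: "?F \<noteq> {}" using has_source_Rch[OF assms(2)] by blast
  obtain m where m: "m \<in> ?F" "\<forall>b\<in>?F. m \<le> b \<longrightarrow> m = b"
    using finite_has_maximal[OF fin ne] by blast
  have "m \<in> frags E U"
    unfolding frags_def
  proof (intro CollectI conjI allI impI)
    show "has_source E U m" using m(1) by blast
    fix R' assume h: "has_source E U R' \<and> m \<subseteq> R'"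
    hence "R' \<in> ?F" using m(1) by blast
    then show "R' = m" using m(2) h by blast
  qed
  then show ?thesis using m by blast
qed

lemma frag_Rch:
  assumes "R \<in> frags E U"
  shows "\<exists>s\<in>R. R = Rch E U s"
proof -
  have hs: "has_source E U R" and mx: "\<And>R'. has_source E U R' \<Longrightarrow> R \<subseteq> R' \<Longrightarrow> R' = R"
    using assms unfolding frags_def by blast+
  obtain s where s: "s \<in> R" "\<forall>v\<in>R. reach E U s v" "R \<subseteq> U"
    using hs unfolding has_source_def by blast
  have sub: "R \<subseteq> Rch E U s" using s(2) by (auto simp: Rch_def)
  have "s \<in> U" using s(1,3) by blast
  hence "has_source E U (Rch E U s)" by (rule has_source_Rch)
  hence "Rch E U s = R" using mx sub by blast
  then show ?thesis using s by auto
qed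

lemma frags_finite: "finite U \<Longrightarrow> finite (frags E U)"
  by (rule finite_subset[of _ "Pow U"]) (auto dest: frags_subset)

lemma frags_Rch_all:
  assumes "x \<in> U" "Rch E U x = U"
  shows "frags E U = {U}"
proof -
  have hs: "has_source E U U" using has_source_Rch[OF assms(1), of E] assms(2) by simp
  have "U \<in> frags E U" using hs by (auto simp: frags_def has_source_def)
  moreover have "R = U" if "R \<in> frags E U" for R
    using that hs frags_subset[OF that] by (auto simp: frags_def)
  ultimately show ?thesis by blast
qed

lemma frags_one_source:
  assumes "finite U" "card (frags E U) = 1"
  shows "\<exists>s\<in>U. Rch E U s = U"
proof -
  obtain R where R: "frags E U = {R}" using card_1_singletonE[OF assms(2)] by metis
  have "U \<subseteq> R"
  proof
    fix x assume "x \<in> U"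
    then obtain R' where "R' \<in> frags E U" "Rch E U x \<subseteq> R'" using frag_exists[OF assms(1) \<open>x \<in> U\<close>, of E] by blast
    moreover have "x \<in> Rch E U x" using Rch_self[OF \<open>x \<in> U\<close>] .
    ultimately show "x \<in> R" using R by blast
  qed
  moreover have "R \<subseteq> U" using R frags_subset by blast
  ultimately have "R = U" by blast
  moreover obtain s where "s \<in> R" "R = Rch E U s" using frag_Rch[of R E U] R by blast
  ultimately show ?thesis by blast
qed


lemma ddp_one: "finite S \<Longrightarrow> card S = 1 \<Longrightarrow> ddp E S = 1"
  by (subst ddp.simps) (auto simp del: ddp.simps)

lemma ddp_single: "finite S \<Longrightarrow> S \<noteq> {} \<Longrightarrow> card S \<noteq> 1 \<Longrightarrow> card (frags E S) = 1 \<Longrightarrow>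
   ddp E S = 1 + Min ((\<lambda>v. ddp E (S - {v})) ` S)"
  by (subst ddp.simps) (simp del: ddp.simps)

lemma ddp_multi: "finite S \<Longrightarrow> S \<noteq> {} \<Longrightarrow> card S \<noteq> 1 \<Longrightarrow> card (frags E S) \<noteq> 1 \<Longrightarrow>
   ddp E S = Max ((\<lambda>R. ddp E R) ` frags E S)"
  by (subst ddp.simps) (simp del: ddp.simps)

lemma ddp_empty: "ddp E {} = 0"
  by (subst ddp.simps) (simp del: ddp.simps)

lemma frags_ne: "finite U \<Longrightarrow> U \<noteq> {} \<Longrightarrow> frags E U \<noteq> {}"
proof -
  assume a: "finite U" "U \<noteq> {}"
  then obtain x where "x \<in> U" by blast
  then show ?thesis using frag_exists[OF a(1) \<open>x \<in> U\<close>, of E] by blast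
qed

lemma card_minus_less: "finite U \<Longrightarrow> v \<in> U \<Longrightarrow> card (U - {v}) < card U"
  by (rule card_Diff1_less)

lemma ddp_mono: "finite U \<Longrightarrow> W \<subseteq> U \<Longrightarrow> ddp E W \<le> ddp E U"
proof (induction "card W + card U" arbitrary: W U rule: less_induct)
  case less
  have finW: "finite W" using less.prems finite_subset by blast
  show ?case
  proof (cases "W = {} \<or> W = U")
    case True
    then show ?thesis by (auto simp: ddp_empty)
  next
    case False
    hence Wne: "W \<noteq> {}" and WU: "W \<subset> U" using less.prems by auto
    hence Une: "U \<noteq> {}" by auto
    have cWU: "card W < card U" using WU less.prems(1) psubset_card_mono by blast
    hence cU: "card U \<noteq> 1" using Wne finW by (metis card_0_eq less_one)
    show ?thesis
    proof (cases "card W \<noteq> 1 \<and> card (frags E W) \<noteq> 1")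
      case True
      have eq: "ddp E W = Max ((\<lambda>R. ddp E R) ` frags E W)"
        using ddp_multi[OF finW Wne] True by simp
      have "ddp E R \<le> ddp E U" if R: "R \<in> frags E W" for R
      proof -
        have "R \<subset> W" using frags_psubset[OF R] True Wne by blast
        hence "card R < card W" using finW psubset_card_mono by blast
        moreover have "R \<subseteq> U" using \<open>R \<subset> W\<close> WU by blast
        ultimately show ?thesis using less.hyps[of R U] less.prems(1) by simp
      qed
      moreover have "finite (frags E W)" using frags_finite[OF finW] .
      moreover have "frags E W \<noteq> {}" using frags_ne[OF finW Wne] .
      ultimately show ?thesis using eq by (simp add: Max_le_iff)
    next
      case False
      hence Wcases: "card W = 1 \<or> card (frags E W) = 1" by blast
      have src: "\<exists>s\<in>W. W \<subseteq> Rch E W s"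
      proof (cases "card W = 1")
        case True
        then obtain s where "W = {s}" using card_1_singletonE by blast
        then show ?thesis using Rch_self[of s W E] by auto
      next
        case False
        then show ?thesis using Wcases frags_one_source[OF finW] by fastforce
      qed
      then obtain s where s: "s \<in> W" "W \<subseteq> Rch E W s" by blast
      show ?thesis
      proof (cases "card (frags E U) = 1")
        case False
        have sU: "s \<in> U" using s WU by blast
        obtain R where R: "R \<in> frags E U" "Rch E U s \<subseteq> R"
          using frag_exists[OF less.prems(1) sU] by blast
        have "W \<subseteq> R" using s(2) Rch_mono[of W U E s] WU R(2) by blast
        have "R \<subset> U" using frags_psubset[OF R(1)] False Une by blast
        hence "card R < card U" using less.prems(1) psubset_card_mono by blast
        hence "ddp E W \<le> ddp E R"
          using less.hyps[of W R] \<open>W \<subseteq> R\<close> less.prems(1) \<open>R \<subset> U\<close> finite_subset by fastforce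
        also have "ddp E R \<le> Max ((\<lambda>R. ddp E R) ` frags E U)"
          using R(1) frags_finite[OF less.prems(1)] by simp
        also have "\<dots> = ddp E U" using ddp_multi[OF less.prems(1) Une cU False] by simp
        finally show ?thesis .
      next
        case True
        have eqU: "ddp E U = 1 + Min ((\<lambda>v. ddp E (U - {v})) ` U)"
          using ddp_single[OF less.prems(1) Une cU True] .
        obtain v where v: "v \<in> U" "Min ((\<lambda>v. ddp E (U - {v})) ` U) = ddp E (U - {v})"
          using Min_in[of "(\<lambda>v. ddp E (U - {v})) ` U"] less.prems(1) Une by fastforce
        have cUv: "card (U - {v}) < card U" using card_minus_less[OF less.prems(1) v(1)] .
        show ?thesis
        proof (cases "v \<in> W")
          case False
          hence "W \<subseteq> U - {v}" using WU by blast
          hence "ddp E W \<le> ddp E (U - {v})" using less.hyps[of W "U - {v}"] cUv less.prems(1) by simp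
          then show ?thesis using eqU v(2) by simp
        next
          case True
          show ?thesis
          proof (cases "card W = 1")
            case True
            then show ?thesis using ddp_one[OF finW] eqU by simp
          next
            case False
            hence fW: "card (frags E W) = 1" using Wcases by blast
            have "ddp E W = 1 + Min ((\<lambda>u. ddp E (W - {u})) ` W)"
              using ddp_single[OF finW Wne False fW] .
            also have "\<dots> \<le> 1 + ddp E (W - {v})"
              using True finW by simp
            also have "ddp E (W - {v}) \<le> ddp E (U - {v})"
            proof -
              have "card (W - {v}) < card W" using card_minus_less[OF finW True] .
              moreover have "W - {v} \<subseteq> U - {v}" using WU by blast
              ultimately show ?thesis using less.hyps[of "W - {v}" "U - {v}"] less.prems(1) cUv by simp
            qed
            finally show ?thesis using eqU v(2) by simp
          qed
        qed
      qed
    qed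
  qed
qed

lemma ddp_max:
  assumes "finite U" "U \<noteq> {}"
  shows "\<exists>x\<in>U. ddp E U \<le> ddp E (Rch E U x)"
proof (cases "card U = 1")
  case True
  then obtain x where "U = {x}" using card_1_singletonE by blast
  hence "Rch E U x = U" using Rch_sub[of E U x] Rch_self[of x U E] by blast
  then show ?thesis using \<open>U = {x}\<close> by auto
next
  case c1: False
  show ?thesis
  proof (cases "card (frags E U) = 1")
    case True
    then show ?thesis using frags_one_source[OF assms(1) True] by (metis order_refl)
  next
    case False
    have eq: "ddp E U = Max ((\<lambda>R. ddp E R) ` frags E U)" using ddp_multi[OF assms c1 False] .
    obtain R where R: "R \<in> frags E U" "ddp E U = ddp E R"
      using Max_in[of "(\<lambda>R. ddp E R) ` frags E U"] frags_finite[OF assms(1)] frags_ne[OF assms] eq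
      by fastforce
    obtain s where s: "s \<in> R" "R = Rch E U s" using frag_Rch[OF R(1)] by blast
    have "s \<in> U" using s frags_subset[OF R(1)] by blast
    then show ?thesis using R s by auto
  qed
qed

lemma game:
  assumes "finite V" "r \<in> V - C"
  shows "cop_wins E V C r n \<longleftrightarrow> ddp E (Rch E (V - C) r) \<le> n"
  using assms(2)
proof (induction n arbitrary: C r)
  case 0
  let ?T = "Rch E (V - C) r"
  have "finite ?T" using assms(1) Rch_sub[of E "V - C" r] finite_subset by blast
  moreover have "{r} \<subseteq> ?T" using Rch_self[OF "0.prems"] by blast
  ultimately have "ddp E {r} \<le> ddp E ?T" using ddp_mono by blast
  moreover have "ddp E {r} = 1" using ddp_one[of "{r}" E] by simp
  ultimately show ?case by simp
next
  case (Suc n)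
  define S where "S = V - C"
  define T where "T = Rch E S r"
  have rS: "r \<in> S" using Suc.prems S_def by simp
  have TS: "T \<subseteq> S" unfolding T_def by (rule Rch_sub)
  have finS: "finite S" using assms(1) unfolding S_def by simp
  have finT: "finite T" using finite_subset[OF TS finS] .
  have rT: "r \<in> T" using Rch_self[OF rS] T_def by simp
  have Tne: "T \<noteq> {}" using rT by blast
  have TT: "Rch E T r = T" using Rch_idem[OF rS] T_def by simp
  have fT: "card (frags E T) = 1" using frags_Rch_all[OF rT TT] by simp
  have TV: "Rch E (V - C) r = T" unfolding T_def S_def ..
  have SC: "\<And>v. V - (C \<union> {v}) = S - {v}" using S_def by blast
  have loc: "\<And>x v. x \<in> T \<Longrightarrow> Rch E (S - {v}) x = Rch E (T - {v}) x"
    unfolding T_def by (rule Rch_restrict)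
  show ?case
  proof
    assume "cop_wins E V C r (Suc n)"
    then obtain v where v: "v \<in> V"
      "\<And>r'. reach E S r r' \<Longrightarrow> r' = v \<or> cop_wins E V (C \<union> {v}) r' n"
      using S_def by auto
    show "ddp E (Rch E (V - C) r) \<le> Suc n"
    proof (cases "card T = 1")
      case True
      then show ?thesis using ddp_one[OF finT] TV by simp
    next
      case c1: False
      have eqT: "ddp E T = 1 + Min ((\<lambda>u. ddp E (T - {u})) ` T)"
        using ddp_single[OF finT Tne c1 fT] .
      show ?thesis
      proof (cases "v \<in> T")
        case True
        have "T - {v} \<noteq> {}"
        proof
          assume "T - {v} = {}"
          hence "T = {v}" using True by blast
          thus False using c1 by simp
        qed
        moreover have "finite (T - {v})" using finT by simp
        ultimately obtain x where x: "x \<in> T - {v}" "ddp E (T - {v}) \<le> ddp E (Rch E (T - {v}) x)"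
          using ddp_max[of "T - {v}" E] by blast
        have "reach E S r x" using x(1) T_def by (simp add: Rch_def)
        hence "cop_wins E V (C \<union> {v}) x n" using v(2) x(1) by blast
        moreover have xV: "x \<in> V - (C \<union> {v})" using x(1) TS SC[of v] by blast
        ultimately have "ddp E (Rch E (V - (C \<union> {v})) x) \<le> n" using Suc.IH[OF xV] by simp
        hence "ddp E (Rch E (S - {v}) x) \<le> n" using SC[of v] by simp
        hence h1: "ddp E (T - {v}) \<le> n" using loc[of x v] x by simp
        have h2: "Min ((\<lambda>u. ddp E (T - {u})) ` T) \<le> ddp E (T - {v})"
          using True finT by simp
        have "ddp E T \<le> Suc n" unfolding eqT using h1 h2 by linarith
        then show ?thesis unfolding TV .
      next
        case False
        have "reach E S r r" using reach_refl[OF rS] .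
        moreover have "r \<noteq> v" using False rT by blast
        ultimately have "cop_wins E V (C \<union> {v}) r n" using v(2)[of r] by blast
        moreover have rV: "r \<in> V - (C \<union> {v})" using rS SC[of v] \<open>r \<noteq> v\<close> by blast
        ultimately have "ddp E (Rch E (V - (C \<union> {v})) r) \<le> n" using Suc.IH[OF rV] by simp
        hence "ddp E (Rch E (S - {v}) r) \<le> n" using SC[of v] by simp
        moreover have "Rch E (S - {v}) r = T" using loc[OF rT, of v] False TT
          by (simp add: Diff_insert0)
        ultimately show ?thesis using TV by simp
      qed
    qed
  next
    assume "ddp E (Rch E (V - C) r) \<le> Suc n"
    hence le: "ddp E T \<le> Suc n" using TV by simp
    show "cop_wins E V C r (Suc n)"
    proof (cases "card T = 1")
      case True
      hence "T = {r}" using rT by (metis card_1_singletonE singletonD)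
      have "r \<in> V" using rS S_def by blast
      moreover have "\<forall>r'. reach E (V - C) r r' \<longrightarrow> r' = r"
        using \<open>T = {r}\<close> T_def S_def by (auto simp: Rch_def)
      ultimately show ?thesis by auto
    next
      case c1: False
      have eqT: "ddp E T = 1 + Min ((\<lambda>u. ddp E (T - {u})) ` T)"
        using ddp_single[OF finT Tne c1 fT] .
      obtain u where u: "u \<in> T" "Min ((\<lambda>u. ddp E (T - {u})) ` T) = ddp E (T - {u})"
        using Min_in[of "(\<lambda>u. ddp E (T - {u})) ` T"] finT Tne by fastforce
      have du: "ddp E (T - {u}) \<le> n" using le eqT u(2) by simp
      have uV: "u \<in> V" using u(1) TS S_def by blast
      have "r' = u \<or> cop_wins E V (C \<union> {u}) r' n" if rr: "reach E (V - C) r r'" for r'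
      proof (cases "r' = u")
        case False
        have r'T: "r' \<in> T" using rr S_def T_def by (simp add: Rch_def)
        have r'V: "r' \<in> V - (C \<union> {u})" using r'T TS SC[of u] False by blast
        have "Rch E (S - {u}) r' = Rch E (T - {u}) r'" using loc[OF r'T] .
        moreover have "Rch E (T - {u}) r' \<subseteq> T - {u}" by (rule Rch_sub)
        moreover have "finite (T - {u})" using finT by simp
        ultimately have "ddp E (Rch E (S - {u}) r') \<le> ddp E (T - {u})"
          using ddp_mono[of "T - {u}" "Rch E (T - {u}) r'" E] by simp
        hence "ddp E (Rch E (V - (C \<union> {u})) r') \<le> n" using du SC[of u] by simp
        then show ?thesis using Suc.IH[OF r'V] by simp
      qed simp
      then show ?thesis using uV by auto
    qed
  qed
qed

theorem theorem2p1:
  fixes V :: "'a set" and E :: "('a \<times> 'a) set" and k :: nat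
  assumes "finite V" and "V \<noteq> {}" and "E \<subseteq> V \<times> V" and "k \<ge> 1"
  shows "cops_win E V k \<longleftrightarrow> ddp E V \<le> k"
proof
  assume "cops_win E V k"
  hence "\<forall>r\<in>V. ddp E (Rch E V r) \<le> k"
    using game[OF assms(1)] by (simp add: cops_win_def)
  then show "ddp E V \<le> k" using ddp_max[OF assms(1,2)] by (meson order_trans)
next
  assume a: "ddp E V \<le> k"
  have "\<forall>r\<in>V. ddp E (Rch E V r) \<le> k"
    using ddp_mono[OF assms(1) Rch_sub] a order_trans by blast
  then show "cops_win E V k"
    using game[OF assms(1)] by (simp add: cops_win_def)
qed

end
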